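(* Let $N\ge1$, $n\ge1$, and for $i=1,\dots,N$ let $\mathrm{FTA}_i\in[0,1)$ and $\mathrm{FAR}_i$ be such that $\mathrm{FMR}_i=\mathrm{FAR}_i/(1-\mathrm{FTA}_i)\in(0,1)$. Suppose an outsider attacker submits guesses each succeeding independently with probability $p=1-\prod_{i=1}^N(1-\mathrm{FMR}_i)$. Then the median number $m_{out}$ of trials for the attacker to successfully impersonate a user satisfies $$m_{out}=\Omega\left(2^{-\log_2\left(\sum_{i=1}^N\frac{\mathrm{FAR}_i}{1-\mathrm{FTA}_i}\left(1+\frac{\mathrm{FAR}_i}{1-\mathrm{FTA}_i}\right)\right)}\right)\quad\text{and}\quad m_{out}=O\left(2^{-\log_2\left(\sum_{i=1}^N\frac{\mathrm{FAR}_i}{1-\mathrm{FTA}_i}\right)}\right).$$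
   Context: For user $i$: $\mathrm{FMR}_i$ is the False Match Rate (probability an impostor guess is wrongly matched to user $i$), $\mathrm{FTA}_i$ is the Failure To Acquire rate, and $\mathrm{FAR}_i$ the False Acceptance Rate, related by $\mathrm{FAR}_i=\mathrm{FMR}_i(1-\mathrm{FTA}_i)$. The median of the number of trials until the first success of independent trials with success probability $p$ is taken to be $-1/\log_2(1-p)$. *)

theory Defs
  imports Complex_Main "HOL-Library.Landau_Symbols"
begin

definition FMR :: "real \<Rightarrow> real \<Rightarrow> real" where
  "FMR far fta = far / (1 - fta)"

definition median_trials :: "real \<Rightarrow> real" where
  "median_trials p = - 1 / log 2 (1 - p)"

definition outsider_prob :: "nat \<Rightarrow> (nat \<Rightarrow> real) \<Rightarrow> (nat \<Rightarrow> real) \<Rightarrow> real" where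
  "outsider_prob N FAR FTA = 1 - (\<Prod>i=1..N. (1 - FMR (FAR i) (FTA i)))"

end

theory Submission
  imports Defs
begin

lemma med_eq:
  fixes x :: "nat \<Rightarrow> real" and N :: nat
  assumes "\<And>i. i \<in> {1..N} \<Longrightarrow> 0 < x i \<and> x i < 1"
  shows "median_trials (1 - (\<Prod>i=1..N. (1 - x i))) = ln 2 / (\<Sum>i=1..N. - ln (1 - x i))"
proof -
  have "ln (\<Prod>i=1..N. (1 - x i)) = (\<Sum>i=1..N. ln (1 - x i))"
    by (rule ln_prod) (use assms in fastforce)+
  then have "log 2 (\<Prod>i=1..N. (1 - x i)) = (\<Sum>i=1..N. ln (1 - x i)) / ln 2"
    by (simp add: log_def)
  then have "median_trials (1 - (\<Prod>i=1..N. (1 - x i))) = - (ln 2 / (\<Sum>i=1..N. ln (1 - x i)))"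
    by (simp add: median_trials_def)
  then show ?thesis
    by (simp add: sum_negf)
qed

theorem proposition3p3:
  fixes F :: "'a filter" and N n :: nat and FAR FTA :: "'a \<Rightarrow> nat \<Rightarrow> real"
  assumes "N \<ge> 1" and "n \<ge> 1" and "F \<noteq> bot"
    and "\<And>t i. i \<in> {1..N} \<Longrightarrow> 0 \<le> FTA t i \<and> FTA t i < 1"
    and "\<And>t i. i \<in> {1..N} \<Longrightarrow> 0 < FMR (FAR t i) (FTA t i) \<and> FMR (FAR t i) (FTA t i) < 1"
    and "\<And>i. i \<in> {1..N} \<Longrightarrow> ((\<lambda>t. FMR (FAR t i) (FTA t i)) \<longlongrightarrow> 0) F"
  shows "(\<lambda>t. median_trials (outsider_prob N (FAR t) (FTA t)))
           \<in> \<Omega>[F](\<lambda>t. 2 powr (- log 2 (\<Sum>i=1..N. (FAR t i / (1 - FTA t i)) * (1 + FAR t i / (1 - FTA t i)))))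
     \<and> (\<lambda>t. median_trials (outsider_prob N (FAR t) (FTA t)))
           \<in> O[F](\<lambda>t. 2 powr (- log 2 (\<Sum>i=1..N. FAR t i / (1 - FTA t i))))"
proof -
  define x where "x t i = FMR (FAR t i) (FTA t i)" for t i
  have xr: "FAR t i / (1 - FTA t i) = x t i" for t i by (simp add: x_def FMR_def)
  have xb: "i \<in> {1..N} \<Longrightarrow> 0 < x t i \<and> x t i < 1" for t i using assms(5) by (simp add: x_def)
  define L where "L t = (\<Sum>i=1..N. - ln (1 - x t i))" for t
  have med: "median_trials (outsider_prob N (FAR t) (FTA t)) = ln 2 / L t" for t
    unfolding outsider_prob_def L_def x_def[symmetric] by (rule med_eq) (use xb in auto)
  have ne: "{1..N} \<noteq> {}" using assms(1) by auto
  define S where "S t = (\<Sum>i=1..N. x t i)" for t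
  define T where "T t = (\<Sum>i=1..N. x t i * (1 + x t i))" for t
  have Spos: "S t > 0" for t unfolding S_def by (rule sum_pos) (use xb ne in auto)
  have Tpos: "T t > 0" for t unfolding T_def
  proof (rule sum_pos)
    fix i assume "i \<in> {1..N}"
    then have "0 < x t i" using xb by auto
    then show "0 < x t i * (1 + x t i)" by simp
  qed (use ne in auto)
  have SL: "S t \<le> L t" for t unfolding S_def L_def
  proof (rule sum_mono)
    fix i assume "i \<in> {1..N}"
    then have "0 < x t i" "x t i < 1" using xb by auto
    have "ln (1 + - x t i) \<le> - x t i" by (rule ln_add_one_self_le_self2) (use \<open>x t i < 1\<close> in auto)
    then show "x t i \<le> - ln (1 - x t i)" by simp
  qed
  have Lpos: "L t > 0" for t using Spos[of t] SL[of t] by linarith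
  have ev: "eventually (\<lambda>t. \<forall>i\<in>{1..N}. x t i \<le> 1/2) F"
  proof (rule eventually_ball_finite)
    show "finite {1..N}" by simp
    show "\<forall>i\<in>{1..N}. eventually (\<lambda>t. x t i \<le> 1/2) F"
    proof
      fix i assume "i \<in> {1..N}"
      then have "((\<lambda>t. x t i) \<longlongrightarrow> 0) F" using assms(6) by (simp add: x_def)
      then have "eventually (\<lambda>t. x t i < 1/2) F" by (rule order_tendstoD) simp
      then show "eventually (\<lambda>t. x t i \<le> 1/2) F" by eventually_elim simp
    qed
  qed
  have LT: "L t \<le> 2 * T t" if "\<forall>i\<in>{1..N}. x t i \<le> 1/2" for t
    unfolding L_def T_def sum_distrib_left
  proof (rule sum_mono)
    fix i assume i: "i \<in> {1..N}"
    then have "0 < x t i" "x t i \<le> 1/2" using xb that by auto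
    then have "- x t i - 2 * (x t i)\<^sup>2 \<le> ln (1 - x t i)" by (intro ln_one_minus_pos_lower_bound) auto
    then show "- ln (1 - x t i) \<le> 2 * (x t i * (1 + x t i))"
      using \<open>0 < x t i\<close> by (simp add: power2_eq_square algebra_simps)
  qed
  have p1: "2 powr (- log 2 (T t)) = 1 / T t" for t
    using Tpos[of t] by (simp add: powr_minus inverse_eq_divide)
  have p2: "2 powr (- log 2 (S t)) = 1 / S t" for t
    using Spos[of t] by (simp add: powr_minus inverse_eq_divide)
  have A: "(\<lambda>t. ln 2 / L t) \<in> \<Omega>[F](\<lambda>t. 1 / T t)"
  proof (rule landau_omega.bigI[of "ln 2 / 2"])
    show "0 < ln (2::real) / 2" by simp
    show "eventually (\<lambda>t. norm (ln 2 / L t) \<ge> ln 2 / 2 * norm (1 / T t)) F"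
      using ev
    proof eventually_elim
      case (elim t)
      have h: "L t \<le> 2 * T t" using LT elim by blast
      have "ln 2 / 2 * (1 / T t) = ln 2 / (2 * T t)" by simp
      also have "\<dots> \<le> ln 2 / L t"
        by (rule divide_left_mono) (use h Lpos[of t] Tpos[of t] in auto)
      finally show ?case using Lpos[of t] Tpos[of t] by simp
    qed
  qed
  have B: "(\<lambda>t. ln 2 / L t) \<in> O[F](\<lambda>t. 1 / S t)"
  proof (rule bigoI[of _ "ln 2"])
    show "eventually (\<lambda>t. norm (ln 2 / L t) \<le> ln 2 * norm (1 / S t)) F"
    proof (rule always_eventually, rule allI)
      fix t
      have "ln 2 / L t \<le> ln 2 / S t"
        by (rule divide_left_mono) (use SL[of t] Spos[of t] in auto)
      then show "norm (ln 2 / L t) \<le> ln 2 * norm (1 / S t)" using Lpos[of t] Spos[of t] by simp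
    qed
  qed
  show ?thesis
    unfolding med xr p1[unfolded T_def] p2[unfolded S_def]
    using A B unfolding S_def T_def by simp
qed

end
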